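(* Let $N\in\mathbb N$ and let $f\in R_J(N)$ be nonzero. Then every extreme point of $\nu_J(f)$ lies in $\operatorname{supp}(f)$, and $$\nu_J(f)=\operatorname{Closure}_{\mathbb R^2}\bigl(\operatorname{conv}(\operatorname{supp}(f);\vec A)\bigr)=\operatorname{conv}(\operatorname{supp}(f);\vec A).$$
   Context: $R(N)=\mathbb C[\zeta^{1/N},\zeta^{-1/N}]((q^{1/N}))$ is the ring of formal series $f=\sum_{n,r\in\frac1N\mathbb Z}c(n,r)q^n\zeta^r$ such that for each $n$ only finitely many $r$ have $c(n,r)\ne0$ and $n$ is bounded below on the support $\operatorname{supp}(f)=\{(n,r): c(n,r)\neq0\}$. $R_J(N)$ is the set of $f\in R(N)$ for which there exist $a>0$ and $b,c\in\mathbb R$ with $\operatorname{supp}(f)\subseteq\{(n,r)\in\mathbb R^2: n\ge ar^2+br+c\}$. Let $\vec A=\{(1,0)\}\subset\mathbb R^2$ (the direction of the ray $[0,\infty)\times\{0\}$). For $P\subseteq\mathbb R^2$, $\operatorname{conv}(P;\vec A)=\operatorname{conv}(P)+[0,\infty)\times\{0\}$, i.e. all $\sum_i\alpha_ip_i+\beta(1,0)$ with $p_i\in P$, $\alpha_i\ge0$, $\sum\alpha_i=1$, $\beta\ge0$ (finite sums). The Jacobi valuation is $\nu_J(f)=\operatorname{Closure}_{\mathbb R^2}(\operatorname{conv}(\operatorname{supp}(f);\vec A))$. An extreme point of a convex set $C$ is a point of $C$ not in the relative interior of any line segment contained in $C$. *)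

theory Defs
  imports "HOL-Analysis.Analysis"
begin

text \<open>A formal series f = sum c(n,r) q^n zeta^r is represented by its coefficient
  function on R^2: f (n, r) = c(n,r).\<close>

definition supp :: "(real \<times> real \<Rightarrow> complex) \<Rightarrow> (real \<times> real) set" where
  "supp f = {p. f p \<noteq> 0}"

text \<open>Membership in R(N) = C[zeta^(1/N), zeta^(-1/N)]((q^(1/N))).\<close>
definition in_R :: "nat \<Rightarrow> (real \<times> real \<Rightarrow> complex) \<Rightarrow> bool" where
  "in_R N f \<longleftrightarrow> N > 0
     \<and> (\<forall>p \<in> supp f. \<exists>m k :: int. p = (real_of_int m / real N, real_of_int k / real N))
     \<and> (\<forall>n. finite {r. f (n, r) \<noteq> 0})
     \<and> bdd_below (fst ` supp f)"

definition in_RJ :: "nat \<Rightarrow> (real \<times> real \<Rightarrow> complex) \<Rightarrow> bool" where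
  "in_RJ N f \<longleftrightarrow> in_R N f
     \<and> (\<exists>a > 0. \<exists>b c. supp f \<subseteq> {(n, r). n \<ge> a * r\<^sup>2 + b * r + c})"

text \<open>conv(P; A) with A = {(1,0)}.\<close>
definition convA :: "(real \<times> real) set \<Rightarrow> (real \<times> real) set" where
  "convA P = {x + (\<beta>, 0) | x \<beta>. x \<in> convex hull P \<and> \<beta> \<ge> 0}"

definition nuJ :: "(real \<times> real \<Rightarrow> complex) \<Rightarrow> (real \<times> real) set" where
  "nuJ f = closure (convA (supp f))"

end

theory Submission
  imports Defs
begin

definition Ray :: "(real \<times> real) set" where "Ray = {y. fst y \<ge> 0 \<and> snd y = 0}"

lemma convA_eq: "convA P = (\<Union>x\<in>convex hull P. \<Union>y\<in>Ray. {x + y})"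
  unfolding convA_def Ray_def
  apply (auto)
  by (metis prod.collapse)

lemma closed_Ray: "closed Ray"
  unfolding Ray_def by (intro closed_Collect_conj closed_Collect_le closed_Collect_eq) (auto intro: continuous_intros)

lemma convex_Ray: "convex Ray"
  unfolding Ray_def convex_def by auto

lemma convA_closed: "finite T \<Longrightarrow> closed (convA T)"
  unfolding convA_eq
  by (intro compact_closed_sums closed_Ray compact_convex_hull finite_imp_compact)

lemma convA_convex: "convex (convA T)"
  unfolding convA_eq by (intro convex_sums convex_Ray convex_convex_hull)

lemma convA_sub:
  assumes "convex C" "S \<subseteq> C" "\<And>x \<beta>. x \<in> C \<Longrightarrow> \<beta> \<ge> 0 \<Longrightarrow> x + (\<beta>, 0) \<in> C"
  shows "convA S \<subseteq> C"
proof
  fix z assume "z \<in> convA S"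
  then obtain x \<beta> where xb: "z = x + (\<beta>, 0)" "x \<in> convex hull S" "\<beta> \<ge> 0"
    unfolding convA_def by blast
  have "convex hull S \<subseteq> C" using assms(1,2) by (simp add: hull_minimal)
  hence "x \<in> C" using xb(2) by blast
  thus "z \<in> C" using assms(3)[of x \<beta>] xb by simp
qed

lemma convA_mono:
  assumes "S \<subseteq> T" shows "convA S \<subseteq> convA T"
proof
  fix z assume "z \<in> convA S"
  then obtain x \<beta> where xb: "z = x + (\<beta>, 0)" "x \<in> convex hull S" "\<beta> \<ge> 0"
    unfolding convA_def by blast
  have "x \<in> convex hull T" using hull_mono[OF assms, of convex] xb(2) by blast
  thus "z \<in> convA T" unfolding convA_def using xb by blast
qed

lemma subset_convA: "S \<subseteq> convA S"
proof
  fix x assume x: "x \<in> S"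
  have "x = x + (0,0)" by (metis add.right_neutral zero_prod_def)
  moreover have "x \<in> convex hull S" using x hull_subset[of S convex] by blast
  ultimately show "x \<in> convA S" unfolding convA_def by blast
qed

lemma convA_shift: "x \<in> convA S \<Longrightarrow> \<beta> \<ge> 0 \<Longrightarrow> x + (\<beta>, 0) \<in> convA S"
proof -
  assume "x \<in> convA S" "\<beta> \<ge> 0"
  then obtain y \<gamma> where y: "x = y + (\<gamma>, 0)" "y \<in> convex hull S" "\<gamma> \<ge> 0"
    unfolding convA_def by blast
  have e: "x + (\<beta>, 0) = y + (\<gamma> + \<beta>, 0)" using y by simp
  have "\<gamma> + \<beta> \<ge> 0" using y \<open>\<beta> \<ge> 0\<close> by simp
  then show ?thesis unfolding convA_def using y(2) e by blast
qed

lemma parab_convex: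
  fixes a b c :: real
  assumes "a \<ge> 0"
  shows "convex {p::real\<times>real. fst p \<ge> a * (snd p)\<^sup>2 + b * snd p + c}"
  unfolding convex_def
proof (clarify)
  fix n1 r1 n2 r2 u v :: real
  assume h1: "a * (snd (n1, r1))\<^sup>2 + b * snd (n1, r1) + c \<le> fst (n1, r1)"
    and h2: "a * (snd (n2, r2))\<^sup>2 + b * snd (n2, r2) + c \<le> fst (n2, r2)"
    and u: "0 \<le> u" and v: "0 \<le> v" and uv: "u + v = 1"
  have key: "(u * r1 + v * r2)\<^sup>2 \<le> u * r1\<^sup>2 + v * r2\<^sup>2"
  proof -
    have "u * r1\<^sup>2 + v * r2\<^sup>2 - (u * r1 + v * r2)\<^sup>2 = u * v * (r1 - r2)\<^sup>2"
    proof -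
      have v': "v = 1 - u" using uv by simp
      show ?thesis unfolding v' by (simp add: power2_eq_square algebra_simps)
    qed
    moreover have "u * v * (r1 - r2)\<^sup>2 \<ge> 0" using u v by simp
    ultimately show ?thesis by linarith
  qed
  have f1: "a * (u * r1 + v * r2)\<^sup>2 \<le> a * (u * r1\<^sup>2 + v * r2\<^sup>2)"
    using key assms by (simp add: mult_left_mono)
  have f2: "u * (a * r1\<^sup>2 + b * r1 + c) \<le> u * n1" using h1 u by (simp add: mult_left_mono)
  have f3: "v * (a * r2\<^sup>2 + b * r2 + c) \<le> v * n2" using h2 v by (simp add: mult_left_mono)
  show "a * (snd (u *\<^sub>R (n1, r1) + v *\<^sub>R (n2, r2)))\<^sup>2 + b * snd (u *\<^sub>R (n1, r1) + v *\<^sub>R (n2, r2)) + c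
       \<le> fst (u *\<^sub>R (n1, r1) + v *\<^sub>R (n2, r2))"
  proof -
    have e: "u * (a * r1\<^sup>2 + b * r1 + c) + v * (a * r2\<^sup>2 + b * r2 + c)
       = a * (u * r1\<^sup>2 + v * r2\<^sup>2) + b * (u * r1 + v * r2) + (u + v) * c"
      by (simp add: algebra_simps)
    have uc: "(u + v) * c = c" using uv by simp
    have "a * (u * r1 + v * r2)\<^sup>2 + b * (u * r1 + v * r2) + c \<le> u * n1 + v * n2"
      using e uc f1 f2 f3 by linarith
    then show ?thesis by simp
  qed
qed

lemma hull_sub_convA: "convex hull S \<subseteq> convA S"
proof
  fix x assume x: "x \<in> convex hull S"
  have "x = x + (0,0)" by (metis add.right_neutral zero_prod_def)
  thus "x \<in> convA S" unfolding convA_def using x by blast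
qed

lemma quad_bound:
  fixes a b c A D r :: real
  assumes a: "a > 0" and A: "A \<ge> 0" and h: "a * r\<^sup>2 + b * r + c < A * \<bar>r\<bar> + D"
  shows "\<bar>r\<bar> < (\<bar>b\<bar> + A + \<bar>D - c\<bar>) / a + 1"
proof (rule ccontr)
  define R where "R = (\<bar>b\<bar> + A + \<bar>D - c\<bar>) / a + 1"
  assume "\<not> \<bar>r\<bar> < (\<bar>b\<bar> + A + \<bar>D - c\<bar>) / a + 1"
  hence r: "\<bar>r\<bar> \<ge> R" unfolding R_def by simp
  have R1: "R \<ge> 1" unfolding R_def using a A by simp
  have aR: "a * R = \<bar>b\<bar> + A + \<bar>D - c\<bar> + a" unfolding R_def using a by (simp add: field_simps)
  have sq: "r\<^sup>2 = \<bar>r\<bar> * \<bar>r\<bar>" by (simp add: power2_eq_square)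
  have "a * R * \<bar>r\<bar> \<le> a * \<bar>r\<bar> * \<bar>r\<bar>"
    using r a by (simp add: mult_right_mono)
  hence s1: "(\<bar>b\<bar> + A + \<bar>D - c\<bar> + a) * \<bar>r\<bar> \<le> a * r\<^sup>2" using aR sq by (simp add: mult.assoc)
  have s2: "\<bar>D - c\<bar> * 1 \<le> \<bar>D - c\<bar> * \<bar>r\<bar>" using r R1 by (intro mult_left_mono) auto
  have s3: "0 \<le> a * \<bar>r\<bar>" using a by simp
  have s4: "- (b * r) \<le> \<bar>b\<bar> * \<bar>r\<bar>" by (simp add: abs_mult[symmetric])
  have s5: "(\<bar>b\<bar> + A + \<bar>D - c\<bar> + a) * \<bar>r\<bar> = \<bar>b\<bar> * \<bar>r\<bar> + A * \<bar>r\<bar> + \<bar>D - c\<bar> * \<bar>r\<bar> + a * \<bar>r\<bar>"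
    by (simp add: algebra_simps)
  have s6: "D \<le> \<bar>D - c\<bar> + c" by simp
  show False using h s1 s2 s3 s4 s5 s6 by linarith
qed

lemma lattice_finite:
  fixes N :: nat and A :: "(real \<times> real) set" and B :: real
  assumes N: "N > 0" and lat: "\<forall>p\<in>A. \<exists>m k :: int. p = (real_of_int m / real N, real_of_int k / real N)"
    and bd: "\<forall>p\<in>A. \<bar>fst p\<bar> \<le> B \<and> \<bar>snd p\<bar> \<le> B"
  shows "finite A"
proof -
  define K where "K = \<lceil>B * real N\<rceil>"
  have bnd: "-K \<le> m \<and> m \<le> K" if "\<bar>real_of_int m / real N\<bar> \<le> B" for m :: int
  proof -
    have "\<bar>real_of_int m\<bar> / real N \<le> B" using that by simp
    hence "\<bar>real_of_int m\<bar> \<le> B * real N" using N by (simp add: divide_le_eq)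
    also have "\<dots> \<le> real_of_int K" unfolding K_def by simp
    finally have "\<bar>real_of_int m\<bar> \<le> real_of_int K" .
    hence "\<bar>m\<bar> \<le> K" by linarith
    thus ?thesis by arith
  qed
  have "A \<subseteq> (\<lambda>(m,k). (real_of_int m / real N, real_of_int k / real N)) ` ({-K..K} \<times> {-K..K})"
  proof
    fix p assume p: "p \<in> A"
    then obtain m k :: int where pm: "p = (real_of_int m / real N, real_of_int k / real N)" using lat by blast
    have "-K \<le> m \<and> m \<le> K" using bnd bd p pm by fastforce
    moreover have "-K \<le> k \<and> k \<le> K" using bnd bd p pm by fastforce
    ultimately show "p \<in> (\<lambda>(m,k). (real_of_int m / real N, real_of_int k / real N)) ` ({-K..K} \<times> {-K..K})"
      using pm by force
  qed
  thus ?thesis by (rule finite_subset) simp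
qed

lemma lattice_finite_snd:
  fixes N :: nat and A :: "(real \<times> real) set" and B :: real
  assumes N: "N > 0" and lat: "\<forall>p\<in>A. \<exists>m k :: int. p = (real_of_int m / real N, real_of_int k / real N)"
  shows "finite {r. \<exists>n. (n, r) \<in> A \<and> \<bar>r\<bar> \<le> B}"
proof -
  define K where "K = \<lceil>B * real N\<rceil>"
  have "{r. \<exists>n. (n, r) \<in> A \<and> \<bar>r\<bar> \<le> B} \<subseteq> (\<lambda>k. real_of_int k / real N) ` {-K..K}"
  proof
    fix r assume "r \<in> {r. \<exists>n. (n, r) \<in> A \<and> \<bar>r\<bar> \<le> B}"
    then obtain n where nr: "(n, r) \<in> A" "\<bar>r\<bar> \<le> B" by blast
    then obtain m k :: int where pm: "(n, r) = (real_of_int m / real N, real_of_int k / real N)" using lat by blast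
    hence rk: "r = real_of_int k / real N" by simp
    have "\<bar>real_of_int k\<bar> / real N \<le> B" using nr rk by simp
    hence "\<bar>real_of_int k\<bar> \<le> B * real N" using N by (simp add: divide_le_eq)
    also have "\<dots> \<le> real_of_int K" unfolding K_def by simp
    finally have "\<bar>real_of_int k\<bar> \<le> real_of_int K" .
    hence "\<bar>k\<bar> \<le> K" by linarith
    thus "r \<in> (\<lambda>k. real_of_int k / real N) ` {-K..K}" using rk by force
  qed
  thus ?thesis by (rule finite_subset) simp
qed

lemma key:
  assumes RJ: "in_RJ N f" and ne: "supp f \<noteq> {}"
  shows "\<exists>T. finite T \<and> T \<subseteq> supp f \<and> (\<forall>z\<in>convA (supp f). fst z < M' \<longrightarrow> z \<in> convA T)"
proof -
  define S where "S = supp f"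
  from RJ obtain a b c where a: "a > 0" and parS: "supp f \<subseteq> {(n, r). n \<ge> a * r\<^sup>2 + b * r + c}"
    unfolding in_RJ_def by blast
  have par: "\<And>n r. (n, r) \<in> S \<Longrightarrow> n \<ge> a * r\<^sup>2 + b * r + c" using parS S_def by blast
  from RJ have N: "N > 0" and lat: "\<forall>p\<in>S. \<exists>m k::int. p = (real_of_int m / real N, real_of_int k / real N)"
    and bdd: "bdd_below (fst ` S)" unfolding in_RJ_def in_R_def S_def by auto
  obtain nmin where nmin: "\<And>p. p \<in> S \<Longrightarrow> nmin \<le> fst p" using bdd unfolding bdd_below_def by auto
  obtain s0 where s0: "s0 \<in> S" using ne S_def by blast
  define P where "P = {p::real\<times>real. fst p \<ge> a * (snd p)\<^sup>2 + b * snd p + c}"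
  define H where "H = {p::real\<times>real. fst p \<ge> nmin}"
  have "H = {p. inner (1::real, 0::real) p \<ge> nmin}" unfolding H_def by auto
  hence convH: "convex H" using convex_halfspace_ge by metis
  have KP: "convA S \<subseteq> P \<inter> H"
  proof (rule convA_sub)
    show "convex (P \<inter> H)" unfolding P_def using parab_convex[of a b c] a convH by (intro convex_Int) auto
    show "S \<subseteq> P \<inter> H" using par nmin unfolding P_def H_def by auto
    show "x + (\<beta>, 0) \<in> P \<inter> H" if "x \<in> P \<inter> H" "\<beta> \<ge> 0" for x \<beta>
      using that unfolding P_def H_def by (cases x) auto
  qed
  define R0 where "R0 = (\<bar>b\<bar> + 0 + \<bar>M' - c\<bar>) / a + 1"
  have zbound: "\<bar>snd z\<bar> < R0 \<and> nmin \<le> fst z" if "z \<in> convA S" "fst z < M'" for z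
  proof -
    have "z \<in> P" "z \<in> H" using KP that by auto
    hence "a * (snd z)\<^sup>2 + b * snd z + c < 0 * \<bar>snd z\<bar> + M'" using that unfolding P_def by simp
    hence "\<bar>snd z\<bar> < R0" unfolding R0_def by (rule quad_bound[OF a order.refl])
    thus ?thesis using \<open>z \<in> H\<close> unfolding H_def by simp
  qed
  define V where "V = {r. \<exists>n. (n, r) \<in> S \<and> \<bar>r\<bar> \<le> R0}"
  have finV: "finite V" unfolding V_def by (rule lattice_finite_snd[OF N lat])
  have "\<forall>r\<in>V. \<exists>n. (n,r) \<in> S" by (auto simp: V_def)
  then obtain g where g: "\<And>r. r \<in> V \<Longrightarrow> (g r, r) \<in> S" by metis
  define M1 where "M1 = (\<Sum>r\<in>V. \<bar>g r\<bar>)"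
  have gM1: "g r \<le> M1" if "r \<in> V" for r
  proof -
    have "\<bar>g r\<bar> \<le> M1" unfolding M1_def using finV that by (intro member_le_sum) auto
    thus ?thesis by simp
  qed
  have "\<exists>\<sigma>1 M31. \<sigma>1 \<ge> 0 \<and> ((\<exists>q\<in>S. snd q > R0) \<longrightarrow>
        (\<exists>q\<in>S. snd q > R0 \<and> fst q \<le> M31 \<and> fst q - nmin \<le> \<sigma>1 * (snd q - R0)))"
  proof (cases "\<exists>q\<in>S. snd q > R0")
    case True
    then obtain q where q: "q \<in> S" "snd q > R0" by blast
    define \<sigma>1 where "\<sigma>1 = (fst q - nmin) / (snd q - R0)"
    have "\<sigma>1 \<ge> 0" unfolding \<sigma>1_def using q nmin[OF q(1)] by simp
    moreover have "\<sigma>1 * (snd q - R0) = fst q - nmin" unfolding \<sigma>1_def using q by simp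
    ultimately show ?thesis using q by (intro exI[of _ \<sigma>1] exI[of _ "fst q"]) auto
  next
    case False
    then show ?thesis by auto
  qed
  then obtain \<sigma>1 M31 where s1: "\<sigma>1 \<ge> 0" and right1: "(\<exists>q\<in>S. snd q > R0) \<Longrightarrow>
        (\<exists>q\<in>S. snd q > R0 \<and> fst q \<le> M31 \<and> fst q - nmin \<le> \<sigma>1 * (snd q - R0))" by blast
  have "\<exists>\<sigma>1 M31. \<sigma>1 \<ge> 0 \<and> ((\<exists>q\<in>S. snd q < -R0) \<longrightarrow>
        (\<exists>q\<in>S. snd q < -R0 \<and> fst q \<le> M31 \<and> fst q - nmin \<le> \<sigma>1 * (-R0 - snd q)))"
  proof (cases "\<exists>q\<in>S. snd q < -R0")
    case True
    then obtain q where q: "q \<in> S" "snd q < -R0" by blast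
    define \<sigma>1 where "\<sigma>1 = (fst q - nmin) / (-R0 - snd q)"
    have "\<sigma>1 \<ge> 0" unfolding \<sigma>1_def using q nmin[OF q(1)] by simp
    moreover have "\<sigma>1 * (-R0 - snd q) = fst q - nmin" unfolding \<sigma>1_def using q by simp
    ultimately show ?thesis using q by (intro exI[of _ \<sigma>1] exI[of _ "fst q"]) auto
  next
    case False
    then show ?thesis by auto
  qed
  then obtain \<sigma>2 M32 where s2: "\<sigma>2 \<ge> 0" and left1: "(\<exists>q\<in>S. snd q < -R0) \<Longrightarrow>
        (\<exists>q\<in>S. snd q < -R0 \<and> fst q \<le> M32 \<and> fst q - nmin \<le> \<sigma>2 * (-R0 - snd q))" by blast
  define \<sigma> where "\<sigma> = \<sigma>1 + \<sigma>2"
  define M3 where "M3 = max M31 M32"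
  have sig: "\<sigma> \<ge> 0" unfolding \<sigma>_def using s1 s2 by simp
  have right: "\<exists>q\<in>S. snd q > R0 \<and> fst q \<le> M3 \<and> fst q - nmin \<le> \<sigma> * (snd q - R0)"
    if ex: "\<exists>q\<in>S. snd q > R0"
  proof -
    obtain q where q: "q\<in>S" "snd q > R0" "fst q \<le> M31" "fst q - nmin \<le> \<sigma>1 * (snd q - R0)"
      using right1[OF ex] by blast
    have "\<sigma>1 * (snd q - R0) \<le> \<sigma> * (snd q - R0)" unfolding \<sigma>_def using q s2
      by (intro mult_right_mono) auto
    hence "fst q - nmin \<le> \<sigma> * (snd q - R0)" using q(4) by linarith
    moreover have "fst q \<le> M3" using q(3) unfolding M3_def by simp
    ultimately show ?thesis using q(1,2) by blast
  qed
  have left: "\<exists>q\<in>S. snd q < -R0 \<and> fst q \<le> M3 \<and> fst q - nmin \<le> \<sigma> * (-R0 - snd q)"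
    if ex: "\<exists>q\<in>S. snd q < -R0"
  proof -
    obtain q where q: "q\<in>S" "snd q < -R0" "fst q \<le> M32" "fst q - nmin \<le> \<sigma>2 * (-R0 - snd q)"
      using left1[OF ex] by blast
    have "\<sigma>2 * (-R0 - snd q) \<le> \<sigma> * (-R0 - snd q)" unfolding \<sigma>_def using q s1
      by (intro mult_right_mono) auto
    hence "fst q - nmin \<le> \<sigma> * (-R0 - snd q)" using q(4) by linarith
    moreover have "fst q \<le> M3" using q(3) unfolding M3_def by simp
    ultimately show ?thesis using q(1,2) by blast
  qed
  define B0 where "B0 = (\<bar>b\<bar> + \<sigma> + \<bar>(M' + \<sigma> * R0) - c\<bar>) / a + 1"
  define M4 where "M4 = M' + \<sigma> * B0 + \<sigma> * R0"
  have far: "fst p - M' \<ge> \<sigma> * (\<bar>snd p\<bar> + R0)" if "p \<in> S" "fst p > M4" for p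
  proof (rule ccontr)
    assume "\<not> ?thesis"
    hence lt: "fst p < \<sigma> * \<bar>snd p\<bar> + (M' + \<sigma> * R0)" by (simp add: algebra_simps)
    have "a * (snd p)\<^sup>2 + b * snd p + c \<le> fst p" using par[of "fst p" "snd p"] that by simp
    hence "a * (snd p)\<^sup>2 + b * snd p + c < \<sigma> * \<bar>snd p\<bar> + (M' + \<sigma> * R0)" using lt by linarith
    hence "\<bar>snd p\<bar> < B0" unfolding B0_def by (rule quad_bound[OF a sig])
    hence "\<sigma> * \<bar>snd p\<bar> \<le> \<sigma> * B0" using sig by (intro mult_left_mono) auto
    thus False using lt that unfolding M4_def by linarith
  qed
  define M where "M = max (max M' (fst s0)) (max M1 (max M3 M4))"
  define T where "T = {p\<in>S. fst p \<le> M}"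
  have TS: "T \<subseteq> S" unfolding T_def by auto
  have s0T: "s0 \<in> T" unfolding T_def M_def using s0 by auto
  define B1 where "B1 = (\<bar>b\<bar> + 0 + \<bar>(M + 1) - c\<bar>) / a + 1"
  have finT: "finite T"
  proof (rule lattice_finite[OF N, of _ "max (max \<bar>nmin\<bar> \<bar>M\<bar>) B1"])
    show "\<forall>p\<in>T. \<exists>m k::int. p = (real_of_int m / real N, real_of_int k / real N)" using lat TS by blast
    show "\<forall>p\<in>T. \<bar>fst p\<bar> \<le> max (max \<bar>nmin\<bar> \<bar>M\<bar>) B1 \<and> \<bar>snd p\<bar> \<le> max (max \<bar>nmin\<bar> \<bar>M\<bar>) B1"
    proof
      fix p assume p: "p \<in> T"
      have f1: "nmin \<le> fst p" "fst p \<le> M" using p nmin unfolding T_def by auto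
      have "a * (snd p)\<^sup>2 + b * snd p + c \<le> fst p" using par[of "fst p" "snd p"] p TS by auto
      hence "a * (snd p)\<^sup>2 + b * snd p + c < 0 * \<bar>snd p\<bar> + (M + 1)" using f1 by simp
      hence "\<bar>snd p\<bar> < B1" unfolding B1_def by (rule quad_bound[OF a order.refl])
      thus "\<bar>fst p\<bar> \<le> max (max \<bar>nmin\<bar> \<bar>M\<bar>) B1 \<and> \<bar>snd p\<bar> \<le> max (max \<bar>nmin\<bar> \<bar>M\<bar>) B1"
        using f1 by auto
    qed
  qed
  have claim: "\<exists>y\<in>T. u1 * fst y + u2 * snd y \<le> u1 * z1 + u2 * z2"
    if u1: "u1 \<ge> 0" and zb: "\<bar>z2\<bar> < R0" "nmin \<le> z1" "z1 < M'"
      and p: "p \<in> S" "u1 * fst p + u2 * snd p \<le> u1 * z1 + u2 * z2" for u1 u2 z1 z2 p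
  proof (cases "fst p \<le> M")
    case True
    hence "p \<in> T" using p unfolding T_def by auto
    then show ?thesis using p by blast
  next
    case False
    hence pM: "fst p > M" by simp
    show ?thesis
    proof (cases "\<bar>snd p\<bar> \<le> R0")
      case True
      hence V: "snd p \<in> V" unfolding V_def using p(1) by (intro CollectI exI[of _ "fst p"]) simp
      have yT: "(g (snd p), snd p) \<in> T" using g[OF V] gM1[OF V] unfolding T_def M_def by auto
      have "g (snd p) \<le> fst p" using gM1[OF V] pM unfolding M_def by simp
      hence "u1 * g (snd p) \<le> u1 * fst p" using u1 by (intro mult_left_mono)
      thus ?thesis using yT p(2) by (intro bexI[of _ "(g (snd p), snd p)"]) auto
    next
      case False
      show ?thesis
      proof (cases "snd p > R0")
        case True
        then obtain q where q: "q\<in>S" "snd q > R0" "fst q \<le> M3" "fst q - nmin \<le> \<sigma> * (snd q - R0)"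
          using right p(1) by blast
        have qT: "q \<in> T" using q unfolding T_def M_def by auto
        have fp: "fst p - M' \<ge> \<sigma> * (\<bar>snd p\<bar> + R0)" using far[OF p(1)] pM unfolding M_def by simp
        define dp where "dp = snd p - z2"
        have dp: "dp > 0" unfolding dp_def using True zb by linarith
        have "\<sigma> * dp \<le> \<sigma> * (\<bar>snd p\<bar> + R0)" unfolding dp_def using sig zb by (intro mult_left_mono) auto
        hence A0: "\<sigma> * dp \<le> fst p - z1" using fp zb by linarith
        have A1: "u1 * (\<sigma> * dp) \<le> u1 * (fst p - z1)" using A0 u1 by (intro mult_left_mono)
        have A2: "u1 * (fst p - z1) + u2 * dp \<le> 0" using p(2) unfolding dp_def by (simp add: algebra_simps)
        have A3: "(u1 * \<sigma> + u2) * dp \<le> 0" using A1 A2 by (simp add: algebra_simps)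
        have A4: "u1 * \<sigma> + u2 \<le> 0" using A3 dp by (simp add: mult_le_0_iff)
        define dq where "dq = snd q - z2"
        have dq: "dq > 0" "snd q - R0 \<le> dq" unfolding dq_def using q zb by auto
        have B1: "u2 * dq \<le> (- (u1 * \<sigma>)) * dq" using A4 dq by (intro mult_right_mono) auto
        have B2: "(u1 * \<sigma>) * (snd q - R0) \<le> (u1 * \<sigma>) * dq" using dq u1 sig by (intro mult_left_mono) auto
        have B3: "u1 * (fst q - nmin) \<le> u1 * (\<sigma> * (snd q - R0))" using q u1 by (intro mult_left_mono)
        have B4: "u1 * (fst q - z1) \<le> u1 * (fst q - nmin)" using zb u1 by (intro mult_left_mono) auto
        have "u1 * (fst q - z1) + u2 * dq \<le> 0"
          using B1 B2 B3 B4 by (simp add: algebra_simps)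
        hence "u1 * fst q + u2 * snd q \<le> u1 * z1 + u2 * z2" unfolding dq_def by (simp add: algebra_simps)
        thus ?thesis using qT by blast
      next
        case False
        hence pl: "snd p < -R0" using \<open>\<not> \<bar>snd p\<bar> \<le> R0\<close> by linarith
        then obtain q where q: "q\<in>S" "snd q < -R0" "fst q \<le> M3" "fst q - nmin \<le> \<sigma> * (-R0 - snd q)"
          using left p(1) by blast
        have qT: "q \<in> T" using q unfolding T_def M_def by auto
        have fp: "fst p - M' \<ge> \<sigma> * (\<bar>snd p\<bar> + R0)" using far[OF p(1)] pM unfolding M_def by simp
        define dp where "dp = z2 - snd p"
        have dp: "dp > 0" unfolding dp_def using pl zb by linarith
        have "\<sigma> * dp \<le> \<sigma> * (\<bar>snd p\<bar> + R0)" unfolding dp_def using sig zb by (intro mult_left_mono) auto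
        hence A0: "\<sigma> * dp \<le> fst p - z1" using fp zb by linarith
        have A1: "u1 * (\<sigma> * dp) \<le> u1 * (fst p - z1)" using A0 u1 by (intro mult_left_mono)
        have A2: "u1 * (fst p - z1) - u2 * dp \<le> 0" using p(2) unfolding dp_def by (simp add: algebra_simps)
        have A3: "(u1 * \<sigma> - u2) * dp \<le> 0" using A1 A2 by (simp add: algebra_simps)
        have A4: "u1 * \<sigma> - u2 \<le> 0" using A3 dp by (simp add: mult_le_0_iff)
        define dq where "dq = z2 - snd q"
        have dq: "dq > 0" "-R0 - snd q \<le> dq" unfolding dq_def using q zb by auto
        have B1: "(u1 * \<sigma>) * dq \<le> u2 * dq" using A4 dq by (intro mult_right_mono) auto
        have B2: "(u1 * \<sigma>) * (-R0 - snd q) \<le> (u1 * \<sigma>) * dq" using dq u1 sig by (intro mult_left_mono) auto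
        have B3: "u1 * (fst q - nmin) \<le> u1 * (\<sigma> * (-R0 - snd q))" using q u1 by (intro mult_left_mono)
        have B4: "u1 * (fst q - z1) \<le> u1 * (fst q - nmin)" using zb u1 by (intro mult_left_mono) auto
        have "u1 * (fst q - z1) - u2 * dq \<le> 0"
          using B1 B2 B3 B4 by (simp add: algebra_simps)
        hence "u1 * fst q + u2 * snd q \<le> u1 * z1 + u2 * z2" unfolding dq_def by (simp add: algebra_simps)
        thus ?thesis using qT by blast
      qed
    qed
  qed
  have main: "z \<in> convA T" if z: "z \<in> convA S" "fst z < M'" for z
  proof (rule ccontr)
    assume zT: "z \<notin> convA T"
    obtain u d where ud: "inner u z < d" "\<And>x. x \<in> convA T \<Longrightarrow> inner u x > d"
      using separating_hyperplane_closed_point[OF convA_convex convA_closed[OF finT] zT] by blast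
    obtain u1 u2 where u: "u = (u1, u2)" by (cases u)
    obtain z1 z2 where zz: "z = (z1, z2)" by (cases z)
    have inn: "inner u (x, y) = u1 * x + u2 * y" for x y by (simp add: u)
    have s0K: "s0 \<in> convA T" using s0T subset_convA by blast
    have u1: "u1 \<ge> 0"
    proof (rule ccontr)
      assume "\<not> u1 \<ge> 0"
      hence neg: "u1 < 0" by simp
      define \<beta> where "\<beta> = (inner u s0 - d) / (- u1) + 1"
      have gt: "inner u s0 > d" using ud(2)[OF s0K] .
      have bpos: "\<beta> \<ge> 0" unfolding \<beta>_def using gt neg by (simp add: divide_nonneg_nonneg less_imp_le add_nonneg_nonneg)
      have "s0 + (\<beta>, 0) \<in> convA T" using convA_shift[OF s0K bpos] .
      hence "inner u (s0 + (\<beta>, 0)) > d" using ud(2) by blast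
      moreover have "inner u (s0 + (\<beta>, 0)) = inner u s0 + u1 * \<beta>" by (simp add: u inner_add_right)
      moreover have "u1 * \<beta> = - (inner u s0 - d) + u1" unfolding \<beta>_def using neg by (simp add: field_simps)
      ultimately show False using neg by linarith
    qed
    have "\<exists>p\<in>S. inner u p \<le> inner u z"
    proof (rule ccontr)
      assume "\<not> ?thesis"
      hence "S \<subseteq> {x. inner u x > inner u z}" by auto
      hence "convA S \<subseteq> {x. inner u x > inner u z}"
      proof (intro convA_sub[OF convex_halfspace_gt])
        show "x + (\<beta>, 0) \<in> {x. inner u z < inner u x}" if "x \<in> {x. inner u z < inner u x}" "\<beta> \<ge> 0" for x \<beta>
        proof -
          have "inner u (x + (\<beta>, 0)) = inner u x + u1 * \<beta>" by (simp add: u inner_add_right)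
          moreover have "u1 * \<beta> \<ge> 0" using u1 that by simp
          ultimately show ?thesis using that by simp
        qed
      qed
      thus False using z by auto
    qed
    then obtain p where p: "p \<in> S" "inner u p \<le> inner u z" by blast
    have p2: "u1 * fst p + u2 * snd p \<le> u1 * z1 + u2 * z2"
      using p(2) inn[of "fst p" "snd p"] inn[of z1 z2] zz by simp
    have zb: "\<bar>z2\<bar> < R0" "nmin \<le> z1" "z1 < M'" using zbound[OF z] z(2) zz by auto
    obtain y where y: "y \<in> T" "u1 * fst y + u2 * snd y \<le> u1 * z1 + u2 * z2"
      using claim[OF u1 zb p(1) p2] by blast
    have "inner u y \<le> inner u z" using y inn[of "fst y" "snd y"] inn[of z1 z2] zz by simp
    moreover have "inner u y > d" using ud(2) y(1) subset_convA by blast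
    ultimately show False using ud(1) by linarith
  qed
  show ?thesis using finT TS main unfolding S_def by blast
qed

theorem lemma4p4:
  fixes N :: nat and f :: "real \<times> real \<Rightarrow> complex"
  assumes "in_RJ N f" and "f \<noteq> (\<lambda>_. 0)"
  shows "(\<forall>x. x extreme_point_of (nuJ f) \<longrightarrow> x \<in> supp f)
         \<and> nuJ f = closure (convA (supp f))
         \<and> closure (convA (supp f)) = convA (supp f)"
proof -
  have ne: "supp f \<noteq> {}" using assms(2) unfolding supp_def by auto
  have cl: "closure (convA (supp f)) \<subseteq> convA (supp f)"
  proof
    fix z assume z: "z \<in> closure (convA (supp f))"
    obtain T where T: "finite T" "T \<subseteq> supp f"
      "\<forall>w\<in>convA (supp f). fst w < fst z + 1 \<longrightarrow> w \<in> convA T"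
      using key[OF assms(1) ne, of "fst z + 1"] by blast
    have op: "open {w::real\<times>real. fst w < fst z + 1}"
      by (intro open_Collect_less continuous_intros)
    have "z \<in> {w. fst w < fst z + 1} \<inter> closure (convA (supp f))" using z by simp
    also have "\<dots> \<subseteq> closure ({w. fst w < fst z + 1} \<inter> convA (supp f))"
      by (rule open_Int_closure_subset[OF op])
    also have "\<dots> \<subseteq> closure (convA T)" using T(3) by (intro closure_mono) auto
    also have "\<dots> = convA T" using convA_closed[OF T(1)] by (simp add: closure_closed)
    also have "\<dots> \<subseteq> convA (supp f)" using convA_mono[OF T(2)] .
    finally show "z \<in> convA (supp f)" .
  qed
  hence eq: "closure (convA (supp f)) = convA (supp f)" using closure_subset by blast
  have ext: "x \<in> supp f" if x: "x extreme_point_of nuJ f" for x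
  proof -
    have xK: "x extreme_point_of convA (supp f)" using x eq unfolding nuJ_def by simp
    hence xin: "x \<in> convA (supp f)" by (simp add: extreme_point_of_def)
    obtain T where T: "finite T" "T \<subseteq> supp f"
      "\<forall>w\<in>convA (supp f). fst w < fst x + 1 \<longrightarrow> w \<in> convA T"
      using key[OF assms(1) ne, of "fst x + 1"] by blast
    have "x \<in> convA T" using T(3) xin by simp
    then obtain y \<beta> where y: "x = y + (\<beta>, 0)" "y \<in> convex hull T" "\<beta> \<ge> 0"
      unfolding convA_def by blast
    have hT: "convex hull T \<subseteq> convA (supp f)"
      using hull_mono[OF T(2), of convex] hull_sub_convA by blast
    have "\<beta> = 0"
    proof (rule ccontr)
      assume "\<beta> \<noteq> 0"
      hence bp: "\<beta> > 0" using y(3) by simp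
      define a where "a = y + (\<beta> / 2, 0)"
      define b where "b = y + (3 * \<beta> / 2, 0)"
      have yK: "y \<in> convA (supp f)" using hT y(2) by blast
      have aK: "a \<in> convA (supp f)" unfolding a_def using convA_shift[OF yK] bp by simp
      have bK: "b \<in> convA (supp f)" unfolding b_def using convA_shift[OF yK] bp by simp
      have ab: "a \<noteq> b" unfolding a_def b_def using bp by (cases y) simp
      have m1: "fst (midpoint a b) = fst x"
        unfolding midpoint_def a_def b_def y(1) by simp
      have m2: "snd (midpoint a b) = snd x"
        unfolding midpoint_def a_def b_def y(1) by simp
      have "x = midpoint a b" using m1 m2 by (simp add: prod_eq_iff)
      hence "x \<in> open_segment a b" using ab by simp
      thus False using xK aK bK unfolding extreme_point_of_def by blast
    qed
    hence xy: "x = y" using y(1) by (metis add.right_neutral zero_prod_def)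
    have "x extreme_point_of (convex hull T)"
    proof -
      have "x \<in> convex hull T" using xy y(2) by simp
      moreover have "\<forall>a\<in>convex hull T. \<forall>b\<in>convex hull T. x \<notin> open_segment a b"
      proof (intro ballI)
        fix a b assume "a \<in> convex hull T" "b \<in> convex hull T"
        hence "a \<in> convA (supp f)" "b \<in> convA (supp f)" using hT by auto
        thus "x \<notin> open_segment a b" using xK unfolding extreme_point_of_def by blast
      qed
      ultimately show ?thesis unfolding extreme_point_of_def by blast
    qed
    hence "x \<in> T" by (rule extreme_point_of_convex_hull)
    thus ?thesis using T(2) by blast
  qed
  have nu: "nuJ f = closure (convA (supp f))" by (simp add: nuJ_def)
  have "\<forall>x. x extreme_point_of (nuJ f) \<longrightarrow> x \<in> supp f" using ext by blast
  thus ?thesis using nu eq by simp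
qed

end
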